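(* Let $\mathcal{D}$ be a liability category, let $N=(G,X,\lambda,\iota;\delta,\hat\alpha)$ be a liability network in $\mathcal{D}$ with $G=(V,E,s,t)$ and liability sheaf $\mathcal{L}$ on $\mathcal{H}_G$. Let $P=\prod_{v}X_v$, $B=\prod_eX_{s(e)}^{\lambda_e}$, $D:P\to B$ with $D_e=\delta_e\circ\pi_{s(e)}$, $A:B\to P$ with $A_v=\alpha_v\circ\langle\pi_e\rangle_{t(e)=v}$, $\Phi=A\circ D:P\to P$, and $\Psi=D\circ A:B\to B$. Then $D$ and $A$ restrict to mutually inverse isomorphisms \[ D:\mathrm{Eq}(\mathrm{id}_P,\Phi)\xrightarrow{\cong}\mathrm{Eq}(\mathrm{id}_B,\Psi),\qquad A:\mathrm{Eq}(\mathrm{id}_B,\Psi)\xrightarrow{\cong}\mathrm{Eq}(\mathrm{id}_P,\Phi) \] in $\mathcal{D}$. In particular $H^0(\mathcal{H}_G;\mathcal{L})\cong\mathrm{Eq}(\mathrm{id}_B,D\circ A)$, and the induced maps $D_*:\mathrm{Fix}(\Phi_* )\to\mathrm{Fix}(\Psi_* )$ and $A_*:\mathrm{Fix}(\Psi_* )\to\mathrm{Fix}(\Phi_* )$ are mutually inverse bijections.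
   Context: A liability category is a category $\mathcal{D}$ such that: (1) $\mathcal{D}$ has a terminal object $1$, all finite products, and equalizers; (2) each $\mathrm{Hom}(1,P)$ carries a partial order and postcomposition with any morphism is order-preserving; (3) each $P$ has a distinguished pullback-stable class $\mathcal{S}_P$ of monomorphisms into $P$ (constraint subobjects); (4) a bound selector $\beta_P:\mathrm{Hom}(1,P)\to\mathcal{S}_P$; (5) $\mathrm{Hom}(1,\prod_iP_i)\to\prod_i\mathrm{Hom}(1,P_i)$ is an order isomorphism for finite families with componentwise order. A liability network in $\mathcal{D}$ is $N=(G,X,\lambda,\iota;\delta,\hat\alpha)$ with $G=(V,E,s,t)$ a finite directed graph, payment objects $X_v$, liability morphisms $\lambda_e:1\to X_{s(e)}$, exogenous resources $\iota_v:1\to X_v$, distributors $\delta_e:X_{s(e)}\to X_{s(e)}^{\lambda_e}$ where $X_{s(e)}^{\lambda_e}$ is the domain of $\beta_{X_{s(e)}}(\lambda_e)$, and aggregators $\hat\alpha_v:X_v\times\prod_{t(e)=v}X_{s(e)}^{\lambda_e}\to X_v$; the partial aggregator is $\alpha_v=\hat\alpha_v\circ(\iota_v\times\mathrm{id})$, empty products being $1$. The liability hypergraph $\mathcal{H}_G$ has vertices $V\sqcup\{e^*:e\in E\}$ and hyperedges $h_v^\delta$ (source $\{v\}$, target $\{e^*:s(e)=v\}$), $h_v^\alpha$ (empty source, target $\{e^*:t(e)=v\}\cup\{v\}$); its incidence category $\mathcal{I}(\mathcal{H}_G)$ has one non-identity morphism $h\to w$ per incidence and no other composites. The liability sheaf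 $\mathcal{L}:\mathcal{I}(\mathcal{H}_G)\to\mathcal{D}$ has stalks $X_v$ at $v$ and $h_v^\delta$, $X_{s(e)}^{\lambda_e}$ at $e^*$, $\prod_{t(e)=v}X_{s(e)}^{\lambda_e}$ at $h_v^\alpha$, and restrictions $\mathrm{id}$, $\delta_e$, projections $\pi_e$, and $\alpha_v$ for $h_v^\delta\to v$, $h_v^\delta\to e^*$, $h_v^\alpha\to e^*$, $h_v^\alpha\to v$ respectively. $H^0(\mathcal{H}_G;\mathcal{L})=\lim_{\mathcal{I}(\mathcal{H}_G)}\mathcal{L}$. For an endomorphism $\Theta:Y\to Y$, $\Theta_*$ is the map $\rho\mapsto\Theta\circ\rho$ on $\mathrm{Hom}(1,Y)$ and $\mathrm{Fix}(\Theta_* )=\{\rho:1\to Y:\Theta\circ\rho=\rho\}$. $\mathrm{Eq}$ denotes the equalizer. *)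

theory Defs
  imports Main
begin

record ('o, 'm) cat =
  Ob  :: "'o set"
  Ar  :: "'m set"
  dm  :: "'m \<Rightarrow> 'o"
  cd  :: "'m \<Rightarrow> 'o"
  cmp :: "'m \<Rightarrow> 'm \<Rightarrow> 'm"   (* cmp C g f = g \<circ> f *)
  idm :: "'o \<Rightarrow> 'm"

definition Hom :: "('o, 'm, 'x) cat_scheme \<Rightarrow> 'o \<Rightarrow> 'o \<Rightarrow> 'm set" where
  "Hom C a b = {f \<in> Ar C. dm C f = a \<and> cd C f = b}"

definition is_category :: "('o, 'm, 'x) cat_scheme \<Rightarrow> bool" where
  "is_category C \<longleftrightarrow>
     (\<forall>f\<in>Ar C. dm C f \<in> Ob C \<and> cd C f \<in> Ob C) \<and>
     (\<forall>a\<in>Ob C. idm C a \<in> Hom C a a) \<and>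
     (\<forall>f\<in>Ar C. \<forall>g\<in>Ar C. dm C g = cd C f \<longrightarrow> cmp C g f \<in> Hom C (dm C f) (cd C g)) \<and>
     (\<forall>f\<in>Ar C. \<forall>g\<in>Ar C. \<forall>h\<in>Ar C. dm C g = cd C f \<longrightarrow> dm C h = cd C g \<longrightarrow>
         cmp C h (cmp C g f) = cmp C (cmp C h g) f) \<and>
     (\<forall>f\<in>Ar C. cmp C (idm C (cd C f)) f = f \<and> cmp C f (idm C (dm C f)) = f)"

definition is_terminal :: "('o, 'm, 'x) cat_scheme \<Rightarrow> 'o \<Rightarrow> bool" where
  "is_terminal C T \<longleftrightarrow> T \<in> Ob C \<and> (\<forall>Z\<in>Ob C. \<exists>!f. f \<in> Hom C Z T)"

definition is_product ::
  "('o, 'm, 'x) cat_scheme \<Rightarrow> 'i set \<Rightarrow> ('i \<Rightarrow> 'o) \<Rightarrow> 'o \<Rightarrow> ('i \<Rightarrow> 'm) \<Rightarrow> bool" where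
  "is_product C I F P \<pi> \<longleftrightarrow>
     P \<in> Ob C \<and> (\<forall>i\<in>I. F i \<in> Ob C \<and> \<pi> i \<in> Hom C P (F i)) \<and>
     (\<forall>Z\<in>Ob C. \<forall>f. (\<forall>i\<in>I. f i \<in> Hom C Z (F i)) \<longrightarrow>
        (\<exists>!u. u \<in> Hom C Z P \<and> (\<forall>i\<in>I. cmp C (\<pi> i) u = f i)))"

definition is_binprod ::
  "('o, 'm, 'x) cat_scheme \<Rightarrow> 'o \<Rightarrow> 'o \<Rightarrow> 'o \<Rightarrow> 'm \<Rightarrow> 'm \<Rightarrow> bool" where
  "is_binprod C A1 A2 P p1 p2 \<longleftrightarrow>
     P \<in> Ob C \<and> A1 \<in> Ob C \<and> A2 \<in> Ob C \<and> p1 \<in> Hom C P A1 \<and> p2 \<in> Hom C P A2 \<and>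
     (\<forall>Z\<in>Ob C. \<forall>f1 f2. f1 \<in> Hom C Z A1 \<longrightarrow> f2 \<in> Hom C Z A2 \<longrightarrow>
        (\<exists>!u. u \<in> Hom C Z P \<and> cmp C p1 u = f1 \<and> cmp C p2 u = f2))"

definition has_finite_products :: "('o, 'm, 'x) cat_scheme \<Rightarrow> bool" where
  "has_finite_products C \<longleftrightarrow>
     (\<forall>(I :: nat set) F. finite I \<longrightarrow> (\<forall>i\<in>I. F i \<in> Ob C) \<longrightarrow> (\<exists>P \<pi>. is_product C I F P \<pi>))"

definition is_equalizer ::
  "('o, 'm, 'x) cat_scheme \<Rightarrow> 'm \<Rightarrow> 'm \<Rightarrow> 'o \<Rightarrow> 'm \<Rightarrow> bool" where
  "is_equalizer C f g E e \<longleftrightarrow>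
     f \<in> Ar C \<and> g \<in> Ar C \<and> dm C f = dm C g \<and> cd C f = cd C g \<and>
     e \<in> Hom C E (dm C f) \<and> cmp C f e = cmp C g e \<and>
     (\<forall>Z\<in>Ob C. \<forall>h. h \<in> Hom C Z (dm C f) \<longrightarrow> cmp C f h = cmp C g h \<longrightarrow>
        (\<exists>!u. u \<in> Hom C Z E \<and> cmp C e u = h))"

definition has_equalizers :: "('o, 'm, 'x) cat_scheme \<Rightarrow> bool" where
  "has_equalizers C \<longleftrightarrow>
     (\<forall>f\<in>Ar C. \<forall>g\<in>Ar C. dm C f = dm C g \<longrightarrow> cd C f = cd C g \<longrightarrow>
        (\<exists>E e. is_equalizer C f g E e))"

definition is_mono :: "('o, 'm, 'x) cat_scheme \<Rightarrow> 'm \<Rightarrow> bool" where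
  "is_mono C m \<longleftrightarrow> m \<in> Ar C \<and>
     (\<forall>f\<in>Ar C. \<forall>g\<in>Ar C. dm C f = dm C g \<longrightarrow> cd C f = dm C m \<longrightarrow> cd C g = dm C m \<longrightarrow>
        cmp C m f = cmp C m g \<longrightarrow> f = g)"

text \<open>The square \<open>m \<circ> f' = f \<circ> m'\<close> with \<open>m : M \<rightarrow> P\<close>, \<open>f : Q \<rightarrow> P\<close>,
  \<open>m' : Q' \<rightarrow> Q\<close>, \<open>f' : Q' \<rightarrow> M\<close> is a pullback (so \<open>m'\<close> is the pullback of \<open>m\<close> along \<open>f\<close>).\<close>
definition is_pullback :: "('o, 'm, 'x) cat_scheme \<Rightarrow> 'm \<Rightarrow> 'm \<Rightarrow> 'm \<Rightarrow> 'm \<Rightarrow> bool" where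
  "is_pullback C m f m' f' \<longleftrightarrow>
     m \<in> Ar C \<and> f \<in> Ar C \<and> m' \<in> Ar C \<and> f' \<in> Ar C \<and>
     cd C m = cd C f \<and> cd C m' = dm C f \<and> cd C f' = dm C m \<and> dm C m' = dm C f' \<and>
     cmp C m f' = cmp C f m' \<and>
     (\<forall>Z\<in>Ob C. \<forall>a b. a \<in> Hom C Z (dm C f) \<longrightarrow> b \<in> Hom C Z (dm C m) \<longrightarrow>
        cmp C f a = cmp C m b \<longrightarrow>
        (\<exists>!u. u \<in> Hom C Z (dm C m') \<and> cmp C m' u = a \<and> cmp C f' u = b))"

section \<open>Liability categories\<close>

record ('o, 'm) lcat = "('o, 'm) cat" +
  one  :: "'o"
  le   :: "'o \<Rightarrow> 'm \<Rightarrow> 'm \<Rightarrow> bool"        (* partial order on Hom(1,P) *)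
  cons :: "'o \<Rightarrow> 'm set"                  (* constraint subobjects S_P *)
  bsel :: "'o \<Rightarrow> 'm \<Rightarrow> 'm"               (* bound selector beta_P *)

definition is_liability_category :: "('o, 'm, 'x) lcat_scheme \<Rightarrow> bool" where
  "is_liability_category D \<longleftrightarrow>
     \<comment> \<open>(1)\<close>
     is_category D \<and> is_terminal D (one D) \<and> has_finite_products D \<and> has_equalizers D \<and>
     \<comment> \<open>(2)\<close>
     (\<forall>P\<in>Ob D.
        (\<forall>x\<in>Hom D (one D) P. le D P x x) \<and>
        (\<forall>x\<in>Hom D (one D) P. \<forall>y\<in>Hom D (one D) P. le D P x y \<longrightarrow> le D P y x \<longrightarrow> x = y) \<and>
        (\<forall>x\<in>Hom D (one D) P. \<forall>y\<in>Hom D (one D) P. \<forall>z\<in>Hom D (one D) P.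
            le D P x y \<longrightarrow> le D P y z \<longrightarrow> le D P x z)) \<and>
     (\<forall>f\<in>Ar D. \<forall>x\<in>Hom D (one D) (dm D f). \<forall>y\<in>Hom D (one D) (dm D f).
        le D (dm D f) x y \<longrightarrow> le D (cd D f) (cmp D f x) (cmp D f y)) \<and>
     \<comment> \<open>(3)\<close>
     (\<forall>P\<in>Ob D. \<forall>m\<in>cons D P. is_mono D m \<and> cd D m = P) \<and>
     (\<forall>P\<in>Ob D. \<forall>m\<in>cons D P. \<forall>f m' f'. cd D f = P \<longrightarrow> is_pullback D m f m' f' \<longrightarrow>
        m' \<in> cons D (dm D f)) \<and>
     \<comment> \<open>(4)\<close>
     (\<forall>P\<in>Ob D. \<forall>x\<in>Hom D (one D) P. bsel D P x \<in> cons D P) \<and>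
     \<comment> \<open>(5) (bijectivity is automatic from the universal property)\<close>
     (\<forall>(I :: nat set) F Pr \<pi>. finite I \<longrightarrow> is_product D I F Pr \<pi> \<longrightarrow>
        (\<forall>x\<in>Hom D (one D) Pr. \<forall>y\<in>Hom D (one D) Pr.
           le D Pr x y \<longleftrightarrow> (\<forall>i\<in>I. le D (F i) (cmp D (\<pi> i) x) (cmp D (\<pi> i) y))))"

section \<open>Liability networks\<close>

record ('o, 'm, 'v, 'e) lnet =
  nV     :: "'v set"
  nE     :: "'e set"
  src    :: "'e \<Rightarrow> 'v"
  tgt    :: "'e \<Rightarrow> 'v"
  nX     :: "'v \<Rightarrow> 'o"
  nlam   :: "'e \<Rightarrow> 'm"
  niota  :: "'v \<Rightarrow> 'm"
  ndelta :: "'e \<Rightarrow> 'm"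
  nahat  :: "'v \<Rightarrow> 'm"
  nPin   :: "'v \<Rightarrow> 'o"          (* chosen product \<Prod>_{t(e)=v} X_{s(e)}^{lambda_e} *)
  npin   :: "'v \<Rightarrow> 'e \<Rightarrow> 'm"
  nXP    :: "'v \<Rightarrow> 'o"          (* chosen product X_v \<times> \<Prod>_{t(e)=v} ... *)
  npr1   :: "'v \<Rightarrow> 'm"
  npr2   :: "'v \<Rightarrow> 'm"

text \<open>\<open>X_{s(e)}^{\<lambda>_e}\<close> = domain of \<open>\<beta>_{X_{s(e)}}(\<lambda>_e)\<close>.\<close>
definition Xlam :: "('o, 'm, 'x) lcat_scheme \<Rightarrow> ('o, 'm, 'v, 'e, 'y) lnet_scheme \<Rightarrow> 'e \<Rightarrow> 'o" where
  "Xlam D N e = dm D (bsel D (nX N (src N e)) (nlam N e))"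

definition in_edges :: "('o, 'm, 'v, 'e, 'y) lnet_scheme \<Rightarrow> 'v \<Rightarrow> 'e set" where
  "in_edges N v = {e \<in> nE N. tgt N e = v}"

definition is_liability_network ::
  "('o, 'm, 'x) lcat_scheme \<Rightarrow> ('o, 'm, 'v, 'e, 'y) lnet_scheme \<Rightarrow> bool" where
  "is_liability_network D N \<longleftrightarrow>
     finite (nV N) \<and> finite (nE N) \<and>
     (\<forall>e\<in>nE N. src N e \<in> nV N \<and> tgt N e \<in> nV N) \<and>
     (\<forall>v\<in>nV N. nX N v \<in> Ob D) \<and>
     (\<forall>e\<in>nE N. nlam N e \<in> Hom D (one D) (nX N (src N e))) \<and>
     (\<forall>v\<in>nV N. niota N v \<in> Hom D (one D) (nX N v)) \<and>
     (\<forall>e\<in>nE N. ndelta N e \<in> Hom D (nX N (src N e)) (Xlam D N e)) \<and>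
     (\<forall>v\<in>nV N. is_product D (in_edges N v) (Xlam D N) (nPin N v) (npin N v)) \<and>
     (\<forall>v\<in>nV N. is_binprod D (nX N v) (nPin N v) (nXP N v) (npr1 N v) (npr2 N v)) \<and>
     (\<forall>v\<in>nV N. nahat N v \<in> Hom D (nXP N v) (nX N v))"

definition bang :: "('o, 'm, 'x) lcat_scheme \<Rightarrow> 'o \<Rightarrow> 'm" where
  "bang D Z = (THE f. f \<in> Hom D Z (one D))"

text \<open>Partial aggregator \<open>\<alpha>_v = \<hat>\<alpha>_v \<circ> (\<iota>_v \<times> id)\<close>, read (via \<open>1 \<times> Y \<cong> Y\<close>) as
  \<open>\<hat>\<alpha>_v \<circ> \<langle>\<iota>_v \<circ> !, id\<rangle> : \<Prod>_{t(e)=v} X^{\<lambda>_e} \<rightarrow> X_v\<close>.\<close>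
definition palpha :: "('o, 'm, 'x) lcat_scheme \<Rightarrow> ('o, 'm, 'v, 'e, 'y) lnet_scheme \<Rightarrow> 'v \<Rightarrow> 'm" where
  "palpha D N v = cmp D (nahat N v)
     (THE u. u \<in> Hom D (nPin N v) (nXP N v) \<and>
             cmp D (npr1 N v) u = cmp D (niota N v) (bang D (nPin N v)) \<and>
             cmp D (npr2 N v) u = idm D (nPin N v))"

section \<open>Liability hypergraph, incidence category and liability sheaf\<close>

datatype ('v, 'e) hnode = NV 'v | NE 'e | HD 'v | HA 'v
  (* NV v = vertex v;  NE e = e*;  HD v = hyperedge h_v^delta;  HA v = hyperedge h_v^alpha *)

definition inc_nodes :: "('o, 'm, 'v, 'e, 'y) lnet_scheme \<Rightarrow> ('v, 'e) hnode set" where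
  "inc_nodes N = NV ` nV N \<union> NE ` nE N \<union> HD ` nV N \<union> HA ` nV N"

text \<open>Incidences \<open>h \<rightarrow> w\<close> (the non-identity morphisms of \<open>\<I>(\<H>_G)\<close>).\<close>
definition incidences :: "('o, 'm, 'v, 'e, 'y) lnet_scheme \<Rightarrow> (('v, 'e) hnode \<times> ('v, 'e) hnode) set" where
  "incidences N =
     {(HD v, NV v) | v. v \<in> nV N} \<union>
     {(HD (src N e), NE e) | e. e \<in> nE N} \<union>
     {(HA (tgt N e), NE e) | e. e \<in> nE N} \<union>
     {(HA v, NV v) | v. v \<in> nV N}"

definition stalk :: "('o, 'm, 'x) lcat_scheme \<Rightarrow> ('o, 'm, 'v, 'e, 'y) lnet_scheme \<Rightarrow> ('v, 'e) hnode \<Rightarrow> 'o" where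
  "stalk D N h = (case h of NV v \<Rightarrow> nX N v | HD v \<Rightarrow> nX N v | NE e \<Rightarrow> Xlam D N e | HA v \<Rightarrow> nPin N v)"

definition restr :: "('o, 'm, 'x) lcat_scheme \<Rightarrow> ('o, 'm, 'v, 'e, 'y) lnet_scheme \<Rightarrow>
    ('v, 'e) hnode \<Rightarrow> ('v, 'e) hnode \<Rightarrow> 'm" where
  "restr D N h w = (case (h, w) of
       (HD v, NV _) \<Rightarrow> idm D (nX N v)
     | (HD _, NE e) \<Rightarrow> ndelta N e
     | (HA v, NE e) \<Rightarrow> npin N v e
     | (HA v, NV _) \<Rightarrow> palpha D N v
     | _ \<Rightarrow> undefined)"

text \<open>\<open>(L, p)\<close> is a limit of a diagram whose shape category has objects \<open>J\<close> and, besides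
  identities, exactly one morphism \<open>h \<rightarrow> w\<close> for each \<open>(h, w) \<in> R\<close> and no non-trivial composites
  (so a functor on it is given by \<open>Fo\<close> on objects and \<open>Fm\<close> on the generating morphisms).\<close>
definition is_limit ::
  "('o, 'm, 'x) cat_scheme \<Rightarrow> 'j set \<Rightarrow> ('j \<times> 'j) set \<Rightarrow> ('j \<Rightarrow> 'o) \<Rightarrow> ('j \<Rightarrow> 'j \<Rightarrow> 'm)
     \<Rightarrow> 'o \<Rightarrow> ('j \<Rightarrow> 'm) \<Rightarrow> bool" where
  "is_limit C J R Fo Fm L p \<longleftrightarrow>
     L \<in> Ob C \<and> (\<forall>j\<in>J. p j \<in> Hom C L (Fo j)) \<and>
     (\<forall>(h, w)\<in>R. cmp C (Fm h w) (p h) = p w) \<and>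
     (\<forall>Z\<in>Ob C. \<forall>q. (\<forall>j\<in>J. q j \<in> Hom C Z (Fo j)) \<longrightarrow> (\<forall>(h, w)\<in>R. cmp C (Fm h w) (q h) = q w) \<longrightarrow>
        (\<exists>!u. u \<in> Hom C Z L \<and> (\<forall>j\<in>J. cmp C (p j) u = q j)))"

definition is_H0 :: "('o, 'm, 'x) lcat_scheme \<Rightarrow> ('o, 'm, 'v, 'e, 'y) lnet_scheme \<Rightarrow>
    'o \<Rightarrow> (('v, 'e) hnode \<Rightarrow> 'm) \<Rightarrow> bool" where
  "is_H0 D N L p \<longleftrightarrow> is_limit D (inc_nodes N) (incidences N) (stalk D N) (restr D N) L p"

definition Fix :: "('o, 'm, 'x) lcat_scheme \<Rightarrow> 'm \<Rightarrow> 'm set" where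
  "Fix D \<Theta> = {\<rho> \<in> Hom D (one D) (dm D \<Theta>). cmp D \<Theta> \<rho> = \<rho>}"

definition tuple :: "('o, 'm, 'x) cat_scheme \<Rightarrow> 'i set \<Rightarrow> 'o \<Rightarrow> ('i \<Rightarrow> 'm) \<Rightarrow> 'o \<Rightarrow> ('i \<Rightarrow> 'm) \<Rightarrow> 'm" where
  "tuple C I P \<pi> Z f = (THE u. u \<in> Hom C Z P \<and> (\<forall>i\<in>I. cmp C (\<pi> i) u = f i))"

end

theory Submission
  imports Defs
begin

lemma Hom_ob: "is_category C \<Longrightarrow> f \<in> Hom C a b \<Longrightarrow> a \<in> Ob C \<and> b \<in> Ob C"
  by (auto simp: is_category_def Hom_def)

lemma Hom_ar: "f \<in> Hom C a b \<Longrightarrow> f \<in> Ar C \<and> dm C f = a \<and> cd C f = b"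
  by (auto simp: Hom_def)

lemma comp_hom: "is_category C \<Longrightarrow> f \<in> Hom C a b \<Longrightarrow> g \<in> Hom C b c \<Longrightarrow> cmp C g f \<in> Hom C a c"
  unfolding is_category_def Hom_def by auto

lemma assoc: "is_category C \<Longrightarrow> f \<in> Hom C a b \<Longrightarrow> g \<in> Hom C b c \<Longrightarrow> h \<in> Hom C c d \<Longrightarrow>
   cmp C h (cmp C g f) = cmp C (cmp C h g) f"
  unfolding is_category_def Hom_def by auto

lemma id_left: "is_category C \<Longrightarrow> f \<in> Hom C a b \<Longrightarrow> cmp C (idm C b) f = f"
  unfolding is_category_def Hom_def by auto

lemma id_right: "is_category C \<Longrightarrow> f \<in> Hom C a b \<Longrightarrow> cmp C f (idm C a) = f"
  unfolding is_category_def Hom_def by auto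

lemma idm_hom: "is_category C \<Longrightarrow> a \<in> Ob C \<Longrightarrow> idm C a \<in> Hom C a a"
  unfolding is_category_def by auto

lemma prod_unique:
  assumes cat: "is_category C" and pr: "is_product C I F P \<pi>"
    and u: "u \<in> Hom C Z P" and u': "u' \<in> Hom C Z P"
    and eq: "\<forall>i\<in>I. cmp C (\<pi> i) u = cmp C (\<pi> i) u'"
  shows "u = u'"
proof -
  have Z: "Z \<in> Ob C" using Hom_ob[OF cat u] by simp
  have pi: "\<And>i. i \<in> I \<Longrightarrow> \<pi> i \<in> Hom C P (F i)" using pr unfolding is_product_def by blast
  have fh: "\<forall>i\<in>I. cmp C (\<pi> i) u \<in> Hom C Z (F i)"
    using comp_hom[OF cat u pi] by blast
  have univ: "\<forall>Z\<in>Ob C. \<forall>f. (\<forall>i\<in>I. f i \<in> Hom C Z (F i)) \<longrightarrow>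
        (\<exists>!u. u \<in> Hom C Z P \<and> (\<forall>i\<in>I. cmp C (\<pi> i) u = f i))"
    using pr unfolding is_product_def by (elim conjE)
  have "\<exists>!w. w \<in> Hom C Z P \<and> (\<forall>i\<in>I. cmp C (\<pi> i) w = cmp C (\<pi> i) u)"
    by (rule univ[rule_format, OF Z comp_hom[OF cat u pi]])
  then show ?thesis using u u' eq by (elim ex1E) (metis)
qed

lemma tuple_prop:
  assumes pr: "is_product C I F P \<pi>" and Z: "Z \<in> Ob C"
    and f: "\<forall>i\<in>I. f i \<in> Hom C Z (F i)"
  shows "tuple C I P \<pi> Z f \<in> Hom C Z P \<and> (\<forall>i\<in>I. cmp C (\<pi> i) (tuple C I P \<pi> Z f) = f i)"
proof -
  have "\<exists>!w. w \<in> Hom C Z P \<and> (\<forall>i\<in>I. cmp C (\<pi> i) w = f i)"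
    using pr Z f unfolding is_product_def by blast
  then show ?thesis unfolding tuple_def by (rule theI')
qed

lemma eq_hom:
  assumes "is_equalizer C f g E e"
  shows "e \<in> Hom C E (dm C f)" "cmp C f e = cmp C g e"
  using assms unfolding is_equalizer_def by auto

lemma eq_factor:
  assumes "is_equalizer C f g E e" "Z \<in> Ob C" "h \<in> Hom C Z (dm C f)" "cmp C f h = cmp C g h"
  shows "\<exists>u. u \<in> Hom C Z E \<and> cmp C e u = h"
  using assms unfolding is_equalizer_def by blast

lemma eq_unique:
  assumes cat: "is_category C" and eq: "is_equalizer C f g E e"
    and u: "u \<in> Hom C Z E" and u': "u' \<in> Hom C Z E" and e: "cmp C e u = cmp C e u'"
  shows "u = u'"
proof -
  have Z: "Z \<in> Ob C" using Hom_ob[OF cat u] by simp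
  have eh: "e \<in> Hom C E (dm C f)" and fe: "cmp C f e = cmp C g e" using eq_hom[OF eq] by auto
  have fh: "f \<in> Hom C (dm C f) (cd C f)" "g \<in> Hom C (dm C f) (cd C f)"
    using eq unfolding is_equalizer_def Hom_def by auto
  have h: "cmp C e u \<in> Hom C Z (dm C f)" using comp_hom[OF cat u eh] .
  have "cmp C f (cmp C e u) = cmp C g (cmp C e u)"
    using assoc[OF cat u eh fh(1)] assoc[OF cat u eh fh(2)] fe by simp
  then have "\<exists>!w. w \<in> Hom C Z E \<and> cmp C e w = cmp C e u"
    using eq Z h unfolding is_equalizer_def by blast
  then show ?thesis using u u' e by metis
qed

lemma eq_map:
  assumes cat: "is_category C" and f: "f \<in> Hom C a b" and g: "g \<in> Hom C b a"
    and eqA: "is_equalizer C (idm C a) (cmp C g f) E e"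
    and eqB: "is_equalizer C (idm C b) (cmp C f g) E' e'"
  shows "\<exists>d. d \<in> Hom C E E' \<and> cmp C e' d = cmp C f e"
proof -
  have a: "a \<in> Ob C" "b \<in> Ob C" using Hom_ob[OF cat f] by auto
  have dA: "dm C (idm C a) = a" "dm C (idm C b) = b" using idm_hom[OF cat] a by (auto simp: Hom_def)
  have e: "e \<in> Hom C E a" using eq_hom(1)[OF eqA] dA by simp
  have E: "E \<in> Ob C" using Hom_ob[OF cat e] by simp
  have fix1: "cmp C (cmp C g f) e = e" using eq_hom(2)[OF eqA] id_left[OF cat e] by simp
  have fe: "cmp C f e \<in> Hom C E b" using comp_hom[OF cat e f] .
  have "cmp C (cmp C f g) (cmp C f e) = cmp C f (cmp C g (cmp C f e))"
    using assoc[OF cat fe g f] by simp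
  also have "\<dots> = cmp C f (cmp C (cmp C g f) e)" using assoc[OF cat e f g] by simp
  also have "\<dots> = cmp C f e" using fix1 by simp
  finally have "cmp C (idm C b) (cmp C f e) = cmp C (cmp C f g) (cmp C f e)"
    using id_left[OF cat fe] by simp
  then show ?thesis using eq_factor[OF eqB E] fe dA by simp
qed

lemma eq_inv:
  assumes cat: "is_category C" and f: "f \<in> Hom C a b" and g: "g \<in> Hom C b a"
    and eqA: "is_equalizer C (idm C a) (cmp C g f) E e"
    and eqB: "is_equalizer C (idm C b) (cmp C f g) E' e'"
    and d: "d \<in> Hom C E E'" "cmp C e' d = cmp C f e"
    and d': "d' \<in> Hom C E' E" "cmp C e d' = cmp C g e'"
  shows "cmp C d' d = idm C E"
proof -
  have a: "a \<in> Ob C" "b \<in> Ob C" using Hom_ob[OF cat f] by auto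
  have dA: "dm C (idm C a) = a" "dm C (idm C b) = b" using idm_hom[OF cat] a by (auto simp: Hom_def)
  have e: "e \<in> Hom C E a" using eq_hom(1)[OF eqA] dA by simp
  have e': "e' \<in> Hom C E' b" using eq_hom(1)[OF eqB] dA by simp
  have E: "E \<in> Ob C" using Hom_ob[OF cat e] by simp
  have fix1: "cmp C (cmp C g f) e = e" using eq_hom(2)[OF eqA] id_left[OF cat e] by simp
  have "cmp C e (cmp C d' d) = cmp C (cmp C e d') d" using assoc[OF cat d(1) d'(1) e] .
  also have "\<dots> = cmp C g (cmp C e' d)" using d'(2) assoc[OF cat d(1) e' g] by simp
  also have "\<dots> = cmp C g (cmp C f e)" using d(2) by simp
  also have "\<dots> = e" using assoc[OF cat e f g] fix1 by simp
  also have "\<dots> = cmp C e (idm C E)" using id_right[OF cat e] by simp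
  finally show ?thesis
    using eq_unique[OF cat eqA comp_hom[OF cat d(1) d'(1)] idm_hom[OF cat E]] by simp
qed


lemma lim_univ:
  assumes L: "is_limit C J R Fo Fm L p" and Z: "Z \<in> Ob C"
    and hq: "\<forall>j\<in>J. q j \<in> Hom C Z (Fo j)"
    and hc: "\<forall>(h, w)\<in>R. cmp C (Fm h w) (q h) = q w"
  shows "\<exists>!u. u \<in> Hom C Z L \<and> (\<forall>j\<in>J. cmp C (p j) u = q j)"
proof -
  have "\<forall>Z\<in>Ob C. \<forall>q. (\<forall>j\<in>J. q j \<in> Hom C Z (Fo j)) \<longrightarrow> (\<forall>(h, w)\<in>R. cmp C (Fm h w) (q h) = q w) \<longrightarrow>
        (\<exists>!u. u \<in> Hom C Z L \<and> (\<forall>j\<in>J. cmp C (p j) u = q j))"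
    using L unfolding is_limit_def by (elim conjE)
  from bspec[OF this Z, THEN spec[of _ q]] show ?thesis using hq hc by blast
qed

theorem mainTheorem3:
  fixes D :: "('o, 'm) lcat"
    and N :: "('o, 'm, 'v, 'e) lnet"
    and P B :: 'o
    and \<pi>P :: "'v \<Rightarrow> 'm" and \<pi>B :: "'e \<Rightarrow> 'm"
    and Dm Am :: 'm
  assumes LC: "is_liability_category D"
    and LN: "is_liability_network D N"
    and Pprod: "is_product D (nV N) (nX N) P \<pi>P"
    and Bprod: "is_product D (nE N) (Xlam D N) B \<pi>B"
    and Dm_hom: "Dm \<in> Hom D P B"
    and Dm_comp: "\<forall>e\<in>nE N. cmp D (\<pi>B e) Dm = cmp D (ndelta N e) (\<pi>P (src N e))"
    and Am_hom: "Am \<in> Hom D B P"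
    and Am_comp: "\<forall>v\<in>nV N. cmp D (\<pi>P v) Am =
                    cmp D (palpha D N v) (tuple D (in_edges N v) (nPin N v) (npin N v) B \<pi>B)"
  shows
    "(\<forall>EP eP EB eB.
        is_equalizer D (idm D P) (cmp D Am Dm) EP eP \<longrightarrow>
        is_equalizer D (idm D B) (cmp D Dm Am) EB eB \<longrightarrow>
        (\<exists>d a. d \<in> Hom D EP EB \<and> a \<in> Hom D EB EP \<and>
               cmp D eB d = cmp D Dm eP \<and> cmp D eP a = cmp D Am eB \<and>
               cmp D a d = idm D EP \<and> cmp D d a = idm D EB)) \<and>
     (\<forall>L p EB eB.
        is_H0 D N L p \<longrightarrow>
        is_equalizer D (idm D B) (cmp D Dm Am) EB eB \<longrightarrow>
        (\<exists>f g. f \<in> Hom D L EB \<and> g \<in> Hom D EB L \<and>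
               cmp D g f = idm D L \<and> cmp D f g = idm D EB)) \<and>
     bij_betw (\<lambda>\<rho>. cmp D Dm \<rho>) (Fix D (cmp D Am Dm)) (Fix D (cmp D Dm Am)) \<and>
     bij_betw (\<lambda>\<sigma>. cmp D Am \<sigma>) (Fix D (cmp D Dm Am)) (Fix D (cmp D Am Dm)) \<and>
     (\<forall>\<rho>\<in>Fix D (cmp D Am Dm). cmp D Am (cmp D Dm \<rho>) = \<rho>) \<and>
     (\<forall>\<sigma>\<in>Fix D (cmp D Dm Am). cmp D Dm (cmp D Am \<sigma>) = \<sigma>)"
proof -
  have cat: "is_category D" using LC unfolding is_liability_category_def by blast
  have trm: "is_terminal D (one D)" using LC unfolding is_liability_category_def by blast
  have Pob: "P \<in> Ob D" using Pprod unfolding is_product_def by blast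
  have Bob: "B \<in> Ob D" using Bprod unfolding is_product_def by blast
  have piP: "\<And>v. v \<in> nV N \<Longrightarrow> \<pi>P v \<in> Hom D P (nX N v)" using Pprod unfolding is_product_def by blast
  have piB: "\<And>e. e \<in> nE N \<Longrightarrow> \<pi>B e \<in> Hom D B (Xlam D N e)" using Bprod unfolding is_product_def by blast
  have srcV: "\<And>e. e \<in> nE N \<Longrightarrow> src N e \<in> nV N \<and> tgt N e \<in> nV N"
    using LN unfolding is_liability_network_def by blast
  have delta: "\<And>e. e \<in> nE N \<Longrightarrow> ndelta N e \<in> Hom D (nX N (src N e)) (Xlam D N e)"
    using LN unfolding is_liability_network_def by blast
  have Pin: "\<And>v. v \<in> nV N \<Longrightarrow> is_product D (in_edges N v) (Xlam D N) (nPin N v) (npin N v)"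
    using LN unfolding is_liability_network_def by blast
  have Pinob: "\<And>v. v \<in> nV N \<Longrightarrow> nPin N v \<in> Ob D" using Pin unfolding is_product_def by blast
  have npinh: "\<And>v e. v \<in> nV N \<Longrightarrow> e \<in> in_edges N v \<Longrightarrow> npin N v e \<in> Hom D (nPin N v) (Xlam D N e)"
    using Pin unfolding is_product_def by blast
  have palpha_hom: "\<And>v. v \<in> nV N \<Longrightarrow> palpha D N v \<in> Hom D (nPin N v) (nX N v)"
  proof -
    fix v assume v: "v \<in> nV N"
    have bp: "is_binprod D (nX N v) (nPin N v) (nXP N v) (npr1 N v) (npr2 N v)"
      using LN v unfolding is_liability_network_def by blast
    have ah: "nahat N v \<in> Hom D (nXP N v) (nX N v)" using LN v unfolding is_liability_network_def by blast
    have io: "niota N v \<in> Hom D (one D) (nX N v)" using LN v unfolding is_liability_network_def by blast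
    have "\<exists>!f. f \<in> Hom D (nPin N v) (one D)" using trm Pinob[OF v] unfolding is_terminal_def by blast
    then have bg: "bang D (nPin N v) \<in> Hom D (nPin N v) (one D)" unfolding bang_def by (rule theI')
    have f1: "cmp D (niota N v) (bang D (nPin N v)) \<in> Hom D (nPin N v) (nX N v)"
      using comp_hom[OF cat bg io] .
    have f2: "idm D (nPin N v) \<in> Hom D (nPin N v) (nPin N v)" using idm_hom[OF cat Pinob[OF v]] .
    have "\<exists>!u. u \<in> Hom D (nPin N v) (nXP N v) \<and>
             cmp D (npr1 N v) u = cmp D (niota N v) (bang D (nPin N v)) \<and>
             cmp D (npr2 N v) u = idm D (nPin N v)"
      using bp Pinob[OF v] f1 f2 unfolding is_binprod_def by blast
    then have "(THE u. u \<in> Hom D (nPin N v) (nXP N v) \<and>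
             cmp D (npr1 N v) u = cmp D (niota N v) (bang D (nPin N v)) \<and>
             cmp D (npr2 N v) u = idm D (nPin N v)) \<in> Hom D (nPin N v) (nXP N v)"
      by (rule the1I2) blast
    then show "palpha D N v \<in> Hom D (nPin N v) (nX N v)"
      unfolding palpha_def using comp_hom[OF cat _ ah] by blast
  qed
  define tB where "tB v = tuple D (in_edges N v) (nPin N v) (npin N v) B \<pi>B" for v
  have tB: "\<And>v. v \<in> nV N \<Longrightarrow> tB v \<in> Hom D B (nPin N v) \<and>
      (\<forall>e\<in>in_edges N v. cmp D (npin N v e) (tB v) = \<pi>B e)"
  proof -
    fix v assume v: "v \<in> nV N"
    have "\<forall>e\<in>in_edges N v. \<pi>B e \<in> Hom D B (Xlam D N e)" using piB by (auto simp: in_edges_def)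
    then show "tB v \<in> Hom D B (nPin N v) \<and> (\<forall>e\<in>in_edges N v. cmp D (npin N v e) (tB v) = \<pi>B e)"
      unfolding tB_def by (rule tuple_prop[OF Pin[OF v] Bob])
  qed
  have Am_comp': "\<And>v. v \<in> nV N \<Longrightarrow> cmp D (\<pi>P v) Am = cmp D (palpha D N v) (tB v)"
    using Am_comp tB_def by simp
  have AD: "cmp D Am Dm \<in> Hom D P P" using comp_hom[OF cat Dm_hom Am_hom] .
  have DA: "cmp D Dm Am \<in> Hom D B B" using comp_hom[OF cat Am_hom Dm_hom] .
  have dmAD: "dm D (cmp D Am Dm) = P" using AD by (simp add: Hom_def)
  have dmDA: "dm D (cmp D Dm Am) = B" using DA by (simp add: Hom_def)

  have part1: "\<forall>EP eP EB eB.
        is_equalizer D (idm D P) (cmp D Am Dm) EP eP \<longrightarrow>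
        is_equalizer D (idm D B) (cmp D Dm Am) EB eB \<longrightarrow>
        (\<exists>d a. d \<in> Hom D EP EB \<and> a \<in> Hom D EB EP \<and>
               cmp D eB d = cmp D Dm eP \<and> cmp D eP a = cmp D Am eB \<and>
               cmp D a d = idm D EP \<and> cmp D d a = idm D EB)"
  proof (intro allI impI)
    fix EP eP EB eB
    assume e1: "is_equalizer D (idm D P) (cmp D Am Dm) EP eP"
      and e2: "is_equalizer D (idm D B) (cmp D Dm Am) EB eB"
    obtain d where d: "d \<in> Hom D EP EB" "cmp D eB d = cmp D Dm eP"
      using eq_map[OF cat Dm_hom Am_hom e1 e2] by blast
    obtain a where a: "a \<in> Hom D EB EP" "cmp D eP a = cmp D Am eB"
      using eq_map[OF cat Am_hom Dm_hom e2 e1] by blast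
    have "cmp D a d = idm D EP" using eq_inv[OF cat Dm_hom Am_hom e1 e2 d a] .
    moreover have "cmp D d a = idm D EB" using eq_inv[OF cat Am_hom Dm_hom e2 e1 a d] .
    ultimately show "\<exists>d a. d \<in> Hom D EP EB \<and> a \<in> Hom D EB EP \<and>
               cmp D eB d = cmp D Dm eP \<and> cmp D eP a = cmp D Am eB \<and>
               cmp D a d = idm D EP \<and> cmp D d a = idm D EB" using a d by blast
  qed

  have fixAD: "\<And>\<rho>. \<rho> \<in> Fix D (cmp D Am Dm) \<Longrightarrow> cmp D Dm \<rho> \<in> Fix D (cmp D Dm Am) \<and> cmp D Am (cmp D Dm \<rho>) = \<rho>"
  proof -
    fix \<rho> assume r: "\<rho> \<in> Fix D (cmp D Am Dm)"
    then have rh: "\<rho> \<in> Hom D (one D) P" and rf: "cmp D (cmp D Am Dm) \<rho> = \<rho>"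
      unfolding Fix_def dmAD by auto
    have 1: "cmp D Am (cmp D Dm \<rho>) = \<rho>" using assoc[OF cat rh Dm_hom Am_hom] rf by simp
    have dh: "cmp D Dm \<rho> \<in> Hom D (one D) B" using comp_hom[OF cat rh Dm_hom] .
    have "cmp D (cmp D Dm Am) (cmp D Dm \<rho>) = cmp D Dm \<rho>"
      using assoc[OF cat dh Am_hom Dm_hom] 1 by simp
    then show "cmp D Dm \<rho> \<in> Fix D (cmp D Dm Am) \<and> cmp D Am (cmp D Dm \<rho>) = \<rho>"
      using 1 dh unfolding Fix_def dmDA by auto
  qed
  have fixDA: "\<And>\<sigma>. \<sigma> \<in> Fix D (cmp D Dm Am) \<Longrightarrow> cmp D Am \<sigma> \<in> Fix D (cmp D Am Dm) \<and> cmp D Dm (cmp D Am \<sigma>) = \<sigma>"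
  proof -
    fix \<rho> assume r: "\<rho> \<in> Fix D (cmp D Dm Am)"
    then have rh: "\<rho> \<in> Hom D (one D) B" and rf: "cmp D (cmp D Dm Am) \<rho> = \<rho>"
      unfolding Fix_def dmDA by auto
    have 1: "cmp D Dm (cmp D Am \<rho>) = \<rho>" using assoc[OF cat rh Am_hom Dm_hom] rf by simp
    have dh: "cmp D Am \<rho> \<in> Hom D (one D) P" using comp_hom[OF cat rh Am_hom] .
    have "cmp D (cmp D Am Dm) (cmp D Am \<rho>) = cmp D Am \<rho>"
      using assoc[OF cat dh Dm_hom Am_hom] 1 by simp
    then show "cmp D Am \<rho> \<in> Fix D (cmp D Am Dm) \<and> cmp D Dm (cmp D Am \<rho>) = \<rho>"
      using 1 dh unfolding Fix_def dmAD by auto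
  qed
  have bij1: "bij_betw (\<lambda>\<rho>. cmp D Dm \<rho>) (Fix D (cmp D Am Dm)) (Fix D (cmp D Dm Am))"
    by (rule bij_betw_byWitness[where f'="\<lambda>\<sigma>. cmp D Am \<sigma>"]) (use fixAD fixDA in auto)
  have bij2: "bij_betw (\<lambda>\<sigma>. cmp D Am \<sigma>) (Fix D (cmp D Dm Am)) (Fix D (cmp D Am Dm))"
    by (rule bij_betw_byWitness[where f'="\<lambda>\<sigma>. cmp D Dm \<sigma>"]) (use fixAD fixDA in auto)

  have part2: "\<forall>L p EB eB.
        is_H0 D N L p \<longrightarrow>
        is_equalizer D (idm D B) (cmp D Dm Am) EB eB \<longrightarrow>
        (\<exists>f g. f \<in> Hom D L EB \<and> g \<in> Hom D EB L \<and>
               cmp D g f = idm D L \<and> cmp D f g = idm D EB)"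
  proof (intro allI impI)
    fix L p EB eB
    assume H0: "is_H0 D N L p" and eqB: "is_equalizer D (idm D B) (cmp D Dm Am) EB eB"
    have lim: "is_limit D (inc_nodes N) (incidences N) (stalk D N) (restr D N) L p"
      using H0 unfolding is_H0_def .
    have Lob: "L \<in> Ob D" using lim unfolding is_limit_def by blast
    have pj: "\<And>j. j \<in> inc_nodes N \<Longrightarrow> p j \<in> Hom D L (stalk D N j)"
      using lim unfolding is_limit_def by blast
    have pc: "\<And>h w. (h, w) \<in> incidences N \<Longrightarrow> cmp D (restr D N h w) (p h) = p w"
      using lim unfolding is_limit_def by blast
    have pNV: "\<And>v. v \<in> nV N \<Longrightarrow> p (NV v) \<in> Hom D L (nX N v)"
      using pj by (force simp: inc_nodes_def stalk_def)
    have pHD: "\<And>v. v \<in> nV N \<Longrightarrow> p (HD v) \<in> Hom D L (nX N v)"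
      using pj by (force simp: inc_nodes_def stalk_def)
    have pNE: "\<And>e. e \<in> nE N \<Longrightarrow> p (NE e) \<in> Hom D L (Xlam D N e)"
      using pj by (force simp: inc_nodes_def stalk_def)
    have pHA: "\<And>v. v \<in> nV N \<Longrightarrow> p (HA v) \<in> Hom D L (nPin N v)"
      using pj by (force simp: inc_nodes_def stalk_def)
    have c1: "\<And>v. v \<in> nV N \<Longrightarrow> p (HD v) = p (NV v)"
    proof -
      fix v assume v: "v \<in> nV N"
      have "cmp D (restr D N (HD v) (NV v)) (p (HD v)) = p (NV v)"
        using pc[of "HD v" "NV v"] v by (auto simp: incidences_def)
      then show "p (HD v) = p (NV v)" using id_left[OF cat pHD[OF v]] by (simp add: restr_def)
    qed
    have c2: "\<And>e. e \<in> nE N \<Longrightarrow> cmp D (ndelta N e) (p (HD (src N e))) = p (NE e)"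
    proof -
      fix e assume e: "e \<in> nE N"
      have "cmp D (restr D N (HD (src N e)) (NE e)) (p (HD (src N e))) = p (NE e)"
        using pc[of "HD (src N e)" "NE e"] e by (auto simp: incidences_def)
      then show "cmp D (ndelta N e) (p (HD (src N e))) = p (NE e)" by (simp add: restr_def)
    qed
    have c3: "\<And>e. e \<in> nE N \<Longrightarrow> cmp D (npin N (tgt N e) e) (p (HA (tgt N e))) = p (NE e)"
    proof -
      fix e assume e: "e \<in> nE N"
      have "cmp D (restr D N (HA (tgt N e)) (NE e)) (p (HA (tgt N e))) = p (NE e)"
        using pc[of "HA (tgt N e)" "NE e"] e by (auto simp: incidences_def)
      then show "cmp D (npin N (tgt N e) e) (p (HA (tgt N e))) = p (NE e)" by (simp add: restr_def)
    qed
    have c4: "\<And>v. v \<in> nV N \<Longrightarrow> cmp D (palpha D N v) (p (HA v)) = p (NV v)"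
    proof -
      fix v assume v: "v \<in> nV N"
      have "cmp D (restr D N (HA v) (NV v)) (p (HA v)) = p (NV v)"
        using pc[of "HA v" "NV v"] v by (auto simp: incidences_def)
      then show "cmp D (palpha D N v) (p (HA v)) = p (NV v)" by (simp add: restr_def)
    qed
    have dmB: "dm D (idm D B) = B" using idm_hom[OF cat Bob] by (simp add: Hom_def)
    have eB: "eB \<in> Hom D EB B" using eq_hom(1)[OF eqB] dmB by simp
    have EBob: "EB \<in> Ob D" using Hom_ob[OF cat eB] by simp
    have eBfix: "cmp D (cmp D Dm Am) eB = eB" using eq_hom(2)[OF eqB] id_left[OF cat eB] by simp
    define qL where "qL = tuple D (nE N) B \<pi>B L (\<lambda>e. p (NE e))"
    have qL: "qL \<in> Hom D L B \<and> (\<forall>e\<in>nE N. cmp D (\<pi>B e) qL = p (NE e))"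
      unfolding qL_def by (rule tuple_prop[OF Bprod Lob]) (use pNE in auto)
    have tq: "\<And>v. v \<in> nV N \<Longrightarrow> cmp D (tB v) qL = p (HA v)"
    proof -
      fix v assume v: "v \<in> nV N"
      have h: "cmp D (tB v) qL \<in> Hom D L (nPin N v)" using comp_hom[OF cat _ tB[OF v, THEN conjunct1]] qL by blast
      show "cmp D (tB v) qL = p (HA v)"
      proof (rule prod_unique[OF cat Pin[OF v] h pHA[OF v]], intro ballI)
        fix e assume e: "e \<in> in_edges N v"
        have eE: "e \<in> nE N" and te: "tgt N e = v" using e by (auto simp: in_edges_def)
        have "cmp D (npin N v e) (cmp D (tB v) qL) = cmp D (cmp D (npin N v e) (tB v)) qL"
          using assoc[OF cat _ tB[OF v, THEN conjunct1] npinh[OF v e]] qL by blast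
        also have "\<dots> = p (NE e)" using tB[OF v] e qL eE by simp
        also have "\<dots> = cmp D (npin N v e) (p (HA v))" using c3[OF eE] te by simp
        finally show "cmp D (npin N v e) (cmp D (tB v) qL) = cmp D (npin N v e) (p (HA v))" .
      qed
    qed
    have AqL: "\<And>v. v \<in> nV N \<Longrightarrow> cmp D (\<pi>P v) (cmp D Am qL) = p (NV v)"
    proof -
      fix v assume v: "v \<in> nV N"
      have "cmp D (\<pi>P v) (cmp D Am qL) = cmp D (cmp D (\<pi>P v) Am) qL"
        using assoc[OF cat _ Am_hom piP[OF v]] qL by blast
      also have "\<dots> = cmp D (cmp D (palpha D N v) (tB v)) qL" using Am_comp'[OF v] by simp
      also have "\<dots> = cmp D (palpha D N v) (cmp D (tB v) qL)"
        using assoc[OF cat _ tB[OF v, THEN conjunct1] palpha_hom[OF v]] qL by metis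
      also have "\<dots> = p (NV v)" using tq[OF v] c4[OF v] by simp
      finally show "cmp D (\<pi>P v) (cmp D Am qL) = p (NV v)" .
    qed
    have AqLh: "cmp D Am qL \<in> Hom D L P" using comp_hom[OF cat _ Am_hom] qL by blast
    have qLfix: "cmp D (cmp D Dm Am) qL = qL"
    proof (rule prod_unique[OF cat Bprod])
      show "cmp D (cmp D Dm Am) qL \<in> Hom D L B" using comp_hom[OF cat _ DA] qL by blast
      show "qL \<in> Hom D L B" using qL by blast
      show "\<forall>e\<in>nE N. cmp D (\<pi>B e) (cmp D (cmp D Dm Am) qL) = cmp D (\<pi>B e) qL"
      proof
        fix e assume e: "e \<in> nE N"
        have s: "src N e \<in> nV N" using srcV[OF e] by blast
        have "cmp D (cmp D Dm Am) qL = cmp D Dm (cmp D Am qL)"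
          using assoc[OF cat _ Am_hom Dm_hom] qL by metis
        then have "cmp D (\<pi>B e) (cmp D (cmp D Dm Am) qL) = cmp D (cmp D (\<pi>B e) Dm) (cmp D Am qL)"
          using assoc[OF cat AqLh Dm_hom piB[OF e]] by simp
        also have "\<dots> = cmp D (cmp D (ndelta N e) (\<pi>P (src N e))) (cmp D Am qL)"
          using Dm_comp e by simp
        also have "\<dots> = cmp D (ndelta N e) (cmp D (\<pi>P (src N e)) (cmp D Am qL))"
          using assoc[OF cat AqLh piP[OF s] delta[OF e]] by simp
        also have "\<dots> = p (NE e)" using AqL[OF s] c1[OF s] c2[OF e] by simp
        also have "\<dots> = cmp D (\<pi>B e) qL" using qL e by simp
        finally show "cmp D (\<pi>B e) (cmp D (cmp D Dm Am) qL) = cmp D (\<pi>B e) qL" .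
      qed
    qed
    have "\<exists>u. u \<in> Hom D L EB \<and> cmp D eB u = qL"
      by (rule eq_factor[OF eqB Lob]) (use qL qLfix dmB id_left[OF cat, of qL L B] in auto)
    then obtain f where f: "f \<in> Hom D L EB" "cmp D eB f = qL" by blast
    define q where "q j = (case j of NV v \<Rightarrow> cmp D (\<pi>P v) (cmp D Am eB)
        | HD v \<Rightarrow> cmp D (\<pi>P v) (cmp D Am eB) | NE e \<Rightarrow> cmp D (\<pi>B e) eB
        | HA v \<Rightarrow> cmp D (tB v) eB)" for j
    have AeB: "cmp D Am eB \<in> Hom D EB P" using comp_hom[OF cat eB Am_hom] .
    have qh: "\<forall>j\<in>inc_nodes N. q j \<in> Hom D EB (stalk D N j)"
    proof
      fix j assume j: "j \<in> inc_nodes N"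
      show "q j \<in> Hom D EB (stalk D N j)"
      proof (cases j)
        case (NV v) then show ?thesis using j comp_hom[OF cat AeB piP] by (auto simp: q_def stalk_def inc_nodes_def)
      next
        case (HD v) then show ?thesis using j comp_hom[OF cat AeB piP] by (auto simp: q_def stalk_def inc_nodes_def)
      next
        case (NE e) then show ?thesis using j comp_hom[OF cat eB piB] by (auto simp: q_def stalk_def inc_nodes_def)
      next
        case (HA v) then show ?thesis using j comp_hom[OF cat eB tB[THEN conjunct1]] by (auto simp: q_def stalk_def inc_nodes_def)
      qed
    qed
    have qc1: "\<And>v. v \<in> nV N \<Longrightarrow> cmp D (restr D N (HD v) (NV v)) (q (HD v)) = q (NV v)"
      using id_left[OF cat comp_hom[OF cat AeB piP]] by (simp add: q_def restr_def)
    have qc2: "\<And>e. e \<in> nE N \<Longrightarrow> cmp D (restr D N (HD (src N e)) (NE e)) (q (HD (src N e))) = q (NE e)"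
    proof -
      fix e assume e: "e \<in> nE N"
      have s: "src N e \<in> nV N" using srcV[OF e] by blast
      have "cmp D (ndelta N e) (cmp D (\<pi>P (src N e)) (cmp D Am eB))
           = cmp D (cmp D (ndelta N e) (\<pi>P (src N e))) (cmp D Am eB)"
        using assoc[OF cat AeB piP[OF s] delta[OF e]] .
      also have "\<dots> = cmp D (cmp D (\<pi>B e) Dm) (cmp D Am eB)" using Dm_comp e by simp
      also have "\<dots> = cmp D (\<pi>B e) (cmp D Dm (cmp D Am eB))"
        using assoc[OF cat AeB Dm_hom piB[OF e]] by simp
      also have "\<dots> = cmp D (\<pi>B e) eB" using assoc[OF cat eB Am_hom Dm_hom] eBfix by simp
      finally show "cmp D (restr D N (HD (src N e)) (NE e)) (q (HD (src N e))) = q (NE e)"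
        by (simp add: q_def restr_def)
    qed
    have qc3: "\<And>e. e \<in> nE N \<Longrightarrow> cmp D (restr D N (HA (tgt N e)) (NE e)) (q (HA (tgt N e))) = q (NE e)"
    proof -
      fix e assume e: "e \<in> nE N"
      have t: "tgt N e \<in> nV N" using srcV[OF e] by blast
      have ei: "e \<in> in_edges N (tgt N e)" using e by (simp add: in_edges_def)
      have "cmp D (npin N (tgt N e) e) (cmp D (tB (tgt N e)) eB) = cmp D (\<pi>B e) eB"
        using assoc[OF cat eB tB[OF t, THEN conjunct1] npinh[OF t ei]] tB[OF t] ei by simp
      then show "cmp D (restr D N (HA (tgt N e)) (NE e)) (q (HA (tgt N e))) = q (NE e)"
        by (simp add: q_def restr_def)
    qed
    have qc4: "\<And>v. v \<in> nV N \<Longrightarrow> cmp D (restr D N (HA v) (NV v)) (q (HA v)) = q (NV v)"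
    proof -
      fix v assume v: "v \<in> nV N"
      have "cmp D (palpha D N v) (cmp D (tB v) eB) = cmp D (cmp D (palpha D N v) (tB v)) eB"
        using assoc[OF cat eB tB[OF v, THEN conjunct1] palpha_hom[OF v]] .
      also have "\<dots> = cmp D (cmp D (\<pi>P v) Am) eB" using Am_comp'[OF v] by simp
      also have "\<dots> = cmp D (\<pi>P v) (cmp D Am eB)" using assoc[OF cat eB Am_hom piP[OF v]] by simp
      finally show "cmp D (restr D N (HA v) (NV v)) (q (HA v)) = q (NV v)"
        by (simp add: q_def restr_def)
    qed
    have qc: "\<forall>(h, w)\<in>incidences N. cmp D (restr D N h w) (q h) = q w"
      unfolding incidences_def ball_Un
    proof (intro conjI)
      show "\<forall>(h, w)\<in>{(HD v, NV v) |v. v \<in> nV N}. cmp D (restr D N h w) (q h) = q w"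
      proof
        fix x :: "('v, 'e) hnode \<times> ('v, 'e) hnode" assume "x \<in> {(HD v, NV v) |v. v \<in> nV N}"
        then obtain v where xe: "x = (HD v, NV v)" and m: "v \<in> nV N" by blast
        show "case x of (h, w) \<Rightarrow> cmp D (restr D N h w) (q h) = q w"
          unfolding xe prod.case by (rule qc1[OF m])
      qed
      show "\<forall>(h, w)\<in>{(HD (src N e), NE e) |e. e \<in> nE N}. cmp D (restr D N h w) (q h) = q w"
      proof
        fix x :: "('v, 'e) hnode \<times> ('v, 'e) hnode" assume "x \<in> {(HD (src N e), NE e) |e. e \<in> nE N}"
        then obtain e where xe: "x = (HD (src N e), NE e)" and m: "e \<in> nE N" by blast
        show "case x of (h, w) \<Rightarrow> cmp D (restr D N h w) (q h) = q w"
          unfolding xe prod.case by (rule qc2[OF m])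
      qed
      show "\<forall>(h, w)\<in>{(HA (tgt N e), NE e) |e. e \<in> nE N}. cmp D (restr D N h w) (q h) = q w"
      proof
        fix x :: "('v, 'e) hnode \<times> ('v, 'e) hnode" assume "x \<in> {(HA (tgt N e), NE e) |e. e \<in> nE N}"
        then obtain e where xe: "x = (HA (tgt N e), NE e)" and m: "e \<in> nE N" by blast
        show "case x of (h, w) \<Rightarrow> cmp D (restr D N h w) (q h) = q w"
          unfolding xe prod.case by (rule qc3[OF m])
      qed
      show "\<forall>(h, w)\<in>{(HA v, NV v) |v. v \<in> nV N}. cmp D (restr D N h w) (q h) = q w"
      proof
        fix x :: "('v, 'e) hnode \<times> ('v, 'e) hnode" assume "x \<in> {(HA v, NV v) |v. v \<in> nV N}"
        then obtain v where xe: "x = (HA v, NV v)" and m: "v \<in> nV N" by blast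
        show "case x of (h, w) \<Rightarrow> cmp D (restr D N h w) (q h) = q w"
          unfolding xe prod.case by (rule qc4[OF m])
      qed
    qed
    have "\<exists>!u. u \<in> Hom D EB L \<and> (\<forall>j\<in>inc_nodes N. cmp D (p j) u = q j)"
      by (rule lim_univ[OF lim EBob qh qc])
    then obtain g where g: "g \<in> Hom D EB L" "\<forall>j\<in>inc_nodes N. cmp D (p j) g = q j" by blast
    have gf: "cmp D g f = idm D L"
    proof -
      have pcone: "\<forall>j\<in>inc_nodes N. p j \<in> Hom D L (stalk D N j)" using pj by blast
      have pcomp: "\<forall>(h, w)\<in>incidences N. cmp D (restr D N h w) (p h) = p w" using pc by blast
      have uq: "\<exists>!u. u \<in> Hom D L L \<and> (\<forall>j\<in>inc_nodes N. cmp D (p j) u = p j)"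
        by (rule lim_univ[OF lim Lob pcone pcomp])
      have gfh: "cmp D g f \<in> Hom D L L" using comp_hom[OF cat f(1) g(1)] .
      have idh: "idm D L \<in> Hom D L L" using idm_hom[OF cat Lob] .
      have "\<forall>j\<in>inc_nodes N. cmp D (p j) (cmp D g f) = p j"
      proof
        fix j assume j: "j \<in> inc_nodes N"
        have "cmp D (p j) (cmp D g f) = cmp D (cmp D (p j) g) f"
          using assoc[OF cat f(1) g(1) pj[OF j]] .
        also have "\<dots> = cmp D (q j) f" using g(2) j by simp
        also have "\<dots> = p j"
        proof (cases j)
          case (NV v)
          then have v: "v \<in> nV N" using j by (auto simp: inc_nodes_def)
          have "cmp D (q j) f = cmp D (\<pi>P v) (cmp D Am (cmp D eB f))"
            using NV assoc[OF cat f(1) AeB piP[OF v]] assoc[OF cat f(1) eB Am_hom] by (simp add: q_def)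
          then show ?thesis using NV AqL[OF v] f(2) by simp
        next
          case (HD v)
          then have v: "v \<in> nV N" using j by (auto simp: inc_nodes_def)
          have "cmp D (q j) f = cmp D (\<pi>P v) (cmp D Am (cmp D eB f))"
            using HD assoc[OF cat f(1) AeB piP[OF v]] assoc[OF cat f(1) eB Am_hom] by (simp add: q_def)
          then show ?thesis using HD AqL[OF v] f(2) c1[OF v] by simp
        next
          case (NE e)
          then have e: "e \<in> nE N" using j by (auto simp: inc_nodes_def)
          have "cmp D (q j) f = cmp D (\<pi>B e) (cmp D eB f)"
            using NE assoc[OF cat f(1) eB piB[OF e]] by (simp add: q_def)
          then show ?thesis using NE qL e f(2) by simp
        next
          case (HA v)
          then have v: "v \<in> nV N" using j by (auto simp: inc_nodes_def)
          have "cmp D (q j) f = cmp D (tB v) (cmp D eB f)"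
            using HA assoc[OF cat f(1) eB tB[OF v, THEN conjunct1]] by (simp add: q_def)
          then show ?thesis using HA tq[OF v] f(2) by simp
        qed
        finally show "cmp D (p j) (cmp D g f) = p j" .
      qed
      moreover have "\<forall>j\<in>inc_nodes N. cmp D (p j) (idm D L) = p j"
        using id_right[OF cat] pj by blast
      ultimately show ?thesis using uq gfh idh by metis
    qed
    have fg: "cmp D f g = idm D EB"
    proof -
      have qLg: "cmp D qL g = eB"
      proof (rule prod_unique[OF cat Bprod])
        show "cmp D qL g \<in> Hom D EB B" using comp_hom[OF cat g(1)] qL by blast
        show "eB \<in> Hom D EB B" using eB .
        show "\<forall>e\<in>nE N. cmp D (\<pi>B e) (cmp D qL g) = cmp D (\<pi>B e) eB"
        proof
          fix e assume e: "e \<in> nE N"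
          have j: "NE e \<in> inc_nodes N" using e by (simp add: inc_nodes_def)
          have "cmp D (\<pi>B e) (cmp D qL g) = cmp D (cmp D (\<pi>B e) qL) g"
            using assoc[OF cat g(1) _ piB[OF e]] qL by blast
          also have "\<dots> = cmp D (p (NE e)) g" using qL e by simp
          also have "\<dots> = cmp D (\<pi>B e) eB" using g(2) j by (simp add: q_def)
          finally show "cmp D (\<pi>B e) (cmp D qL g) = cmp D (\<pi>B e) eB" .
        qed
      qed
      have "cmp D eB (cmp D f g) = cmp D eB (idm D EB)"
        using assoc[OF cat g(1) f(1) eB] f(2) qLg id_right[OF cat eB] by simp
      then show ?thesis
        using eq_unique[OF cat eqB comp_hom[OF cat g(1) f(1)] idm_hom[OF cat EBob]] by simp
    qed
    show "\<exists>f g. f \<in> Hom D L EB \<and> g \<in> Hom D EB L \<and>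
               cmp D g f = idm D L \<and> cmp D f g = idm D EB"
      using f(1) g(1) gf fg by blast
  qed
  have f5: "\<forall>\<rho>\<in>Fix D (cmp D Am Dm). cmp D Am (cmp D Dm \<rho>) = \<rho>" using fixAD by blast
  have f6: "\<forall>\<sigma>\<in>Fix D (cmp D Dm Am). cmp D Dm (cmp D Am \<sigma>) = \<sigma>" using fixDA by blast
  show ?thesis by (rule conjI[OF part1 conjI[OF part2 conjI[OF bij1 conjI[OF bij2 conjI[OF f5 f6]]]]])
qed

end
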